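(* Let $\pi$ be an $r$-homogeneous strongly log-concave distribution with associated matroid $\mathcal{M}=(E,\mathcal{I})$ and weight function $w$. If $I\in\mathcal{I}$ and $|I|\le r-2$, then the matrix $W_I$ has at most one positive eigenvalue.
   Context: $\pi:2^{[n]}\to\mathbb{R}_{\ge0}$ has generating polynomial $g_\pi(x)=\sum_S\pi(S)\prod_{i\in S}x_i$; it is $r$-homogeneous if its support consists of $r$-sets; a polynomial with nonnegative coefficients is strongly log-concave if for every $J\subseteq[n]$, $\partial_J p$ has negative semidefinite $\nabla^2\log(\partial_J p)$ at the all-ones vector; $\pi$ is strongly log-concave if $g_\pi$ is. It is known that the support $\mathcal{B}$ of such $\pi$ is the set of bases of a matroid $\mathcal{M}=(E,\mathcal{I})$ of rank $r$ on $E=[n]$ ($\mathcal{I}$ = subsets of bases). Fix a constant $Z_r>0$ and define weights on $\mathcal{I}$ by $w(B)=\pi(B)Z_r$ for $B\in\mathcal{B}$ and $w(I)=\sum_{I'\supset I,\ |I'|=|I|+1,\ I'\in\mathcal{I}}w(I')$ for $|I|<r$; equivalently $w(I)=(r-|I|)!\sum_{B\in\mathcal{B},B\supseteq I}w(B)$, with $w(I)=0$ for dependent $I$. For $I\in\mathcal{I}$ with $|I|\le r-2$, $W_I$ is the matrix indexed by $E\setminus I$ with $(W_I)_{uv}=w(I\cup\{u,v\})$ for $u\ne v$ and $(W_I)_{uu}=0$; equivalently $W_I=(r-|I|-2)!\,Z_r\,\nabla^2\partial_I g_\pi(\mathbf{1})$. *)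

theory Defs
  imports "Jordan_Normal_Form.Char_Poly"
begin

text \<open>Multiaffine polynomials in variables x_1..x_n are represented by their coefficient
  functions c :: nat set => real (c S = coefficient of the monomial prod_{i in S} x_i).
  The generating polynomial g_pi of pi therefore has coefficient function pi itself.\<close>

type_synonym mpoly = "nat set \<Rightarrow> real"

definition pderiv_ma :: "nat \<Rightarrow> mpoly \<Rightarrow> mpoly" where
  "pderiv_ma i c = (\<lambda>S. if i \<in> S then 0 else c (insert i S))"

definition pderiv_set :: "nat set \<Rightarrow> mpoly \<Rightarrow> mpoly" where
  "pderiv_set J c = (\<lambda>S. if S \<inter> J = {} then c (S \<union> J) else 0)"

definition eval_ones :: "nat \<Rightarrow> mpoly \<Rightarrow> real" where
  "eval_ones n c = (\<Sum>S\<in>Pow {1..n}. c S)"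

text \<open>Hessian of log p at the all-ones vector (for p(1) > 0), as a function of indices:
  d_i d_j log p = (p * d_i d_j p - d_i p * d_j p) / p^2.\<close>
definition hess_log_ones :: "nat \<Rightarrow> mpoly \<Rightarrow> nat \<Rightarrow> nat \<Rightarrow> real" where
  "hess_log_ones n c i j =
     (eval_ones n c * eval_ones n (pderiv_ma i (pderiv_ma j c))
      - eval_ones n (pderiv_ma i c) * eval_ones n (pderiv_ma j c)) / (eval_ones n c)^2"

definition neg_semidef_on :: "nat set \<Rightarrow> (nat \<Rightarrow> nat \<Rightarrow> real) \<Rightarrow> bool" where
  "neg_semidef_on V M \<longleftrightarrow> (\<forall>v :: nat \<Rightarrow> real. (\<Sum>i\<in>V. \<Sum>j\<in>V. v i * M i j * v j) \<le> 0)"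

text \<open>Strong log-concavity of a polynomial with nonnegative coefficients in variables {1..n}:
  for every J, partial_J p is either identically zero (log-concave by convention) or
  has negative semidefinite Hessian of its logarithm at the all-ones vector.\<close>
definition strongly_log_concave :: "nat \<Rightarrow> mpoly \<Rightarrow> bool" where
  "strongly_log_concave n c \<longleftrightarrow>
     (\<forall>S. c S \<ge> 0) \<and>
     (\<forall>J \<subseteq> {1..n}. eval_ones n (pderiv_set J c) > 0 \<longrightarrow>
        neg_semidef_on {1..n} (hess_log_ones n (pderiv_set J c)))"

definition bases :: "(nat set \<Rightarrow> real) \<Rightarrow> nat \<Rightarrow> nat set set" where
  "bases \<pi> n = {B \<in> Pow {1..n}. \<pi> B \<noteq> 0}"

definition indep :: "(nat set \<Rightarrow> real) \<Rightarrow> nat \<Rightarrow> nat set set" where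
  "indep \<pi> n = {I. \<exists>B \<in> bases \<pi> n. I \<subseteq> B}"

definition weight :: "(nat set \<Rightarrow> real) \<Rightarrow> nat \<Rightarrow> nat \<Rightarrow> real \<Rightarrow> nat set \<Rightarrow> real" where
  "weight \<pi> n r Z I = fact (r - card I) * (\<Sum>B\<in>{B \<in> bases \<pi> n. I \<subseteq> B}. \<pi> B * Z)"

definition W_mat :: "(nat set \<Rightarrow> real) \<Rightarrow> nat \<Rightarrow> nat \<Rightarrow> real \<Rightarrow> nat set \<Rightarrow> real mat" where
  "W_mat \<pi> n r Z I =
     (let es = sorted_list_of_set ({1..n} - I) in
      mat (length es) (length es)
        (\<lambda>(a, b). if a = b then 0 else weight \<pi> n r Z (I \<union> {es ! a, es ! b})))"

definition num_pos_eigenvalues :: "real mat \<Rightarrow> nat" where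
  "num_pos_eigenvalues A = (\<Sum>a\<in>{a. a > 0 \<and> eigenvalue A a}. order a (char_poly A))"

end

theory Submission
  imports Defs "Jordan_Normal_Form.Schur_Decomposition"
begin


lemma sym_scalar:
  fixes A :: "real mat"
  assumes A: "A \<in> carrier_mat n n" and sym: "\<And>i j. i < n \<Longrightarrow> j < n \<Longrightarrow> A $$ (i,j) = A $$ (j,i)"
  and u: "u \<in> carrier_vec n" and w: "w \<in> carrier_vec n"
  shows "u \<bullet> (A *\<^sub>v w) = (A *\<^sub>v u) \<bullet> w"
proof -
  have "u \<bullet> (A *\<^sub>v w) = (\<Sum>i<n. u $ i * (\<Sum>j<n. A $$ (i,j) * w $ j))"
    using A u w by (auto simp: scalar_prod_def mult_mat_vec_def row_def lessThan_atLeast0)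
  also have "\<dots> = (\<Sum>i<n. \<Sum>j<n. u $ i * A $$ (i,j) * w $ j)"
    by (simp add: sum_distrib_left mult.assoc)
  also have "\<dots> = (\<Sum>j<n. \<Sum>i<n. u $ i * A $$ (i,j) * w $ j)"
    by (rule sum.swap)
  also have "\<dots> = (\<Sum>j<n. (\<Sum>i<n. A $$ (j,i) * u $ i) * w $ j)"
    by (auto simp: sum_distrib_right sym intro!: sum.cong)
  also have "\<dots> = (A *\<^sub>v u) \<bullet> w"
    using A u w by (auto simp: scalar_prod_def mult_mat_vec_def row_def lessThan_atLeast0 scalar_prod_def)
  finally show ?thesis .
qed



lemma self_pos:
  fixes v :: "real vec"
  assumes v: "v \<in> carrier_vec n" and v0: "v \<noteq> 0\<^sub>v n"
  shows "v \<bullet> v > 0"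
proof -
  from v v0 obtain k where k: "k < n" "v $ k \<noteq> 0" by (metis eq_vecI carrier_vecD index_zero_vec(1) index_zero_vec(2))
  have "v \<bullet> v = (\<Sum>i\<in>{0..<n}. (v $ i)^2)" using v by (simp add: scalar_prod_def power2_eq_square)
  also have "\<dots> \<ge> (v $ k)^2" by (rule member_le_sum, insert k, auto)
  finally show ?thesis using k by (smt (verit) zero_less_power2)
qed

lemma deflate:
  fixes A :: "real mat"
  assumes A: "A \<in> carrier_mat n n" and sym: "\<And>i j. i < n \<Longrightarrow> j < n \<Longrightarrow> A $$ (i,j) = A $$ (j,i)"
  and ord: "Polynomial.order e (char_poly A) \<ge> 2"
  shows "\<exists>u w. u \<in> carrier_vec n \<and> w \<in> carrier_vec n \<and> u \<noteq> 0\<^sub>v n \<and> w \<noteq> 0\<^sub>v n \<and>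
     A *\<^sub>v u = e \<cdot>\<^sub>v u \<and> A *\<^sub>v w = e \<cdot>\<^sub>v w \<and> u \<bullet> w = 0"
proof -
  let ?n1 = "n - 1"
  have cp0: "char_poly A \<noteq> 0" using degree_monic_char_poly[OF A] by auto
  have "poly (char_poly A) e = 0" using ord order_root[of "char_poly A" e] cp0 by auto
  hence e: "eigenvalue A e" using eigenvalue_root_char_poly[OF A] by simp
  define v where "v = find_eigenvector A e"
  from find_eigenvector[OF A e] have ev: "eigenvector A v e" unfolding v_def .
  from this[unfolded eigenvector_def]
  have v[simp]: "v \<in> carrier_vec n" and v0: "v \<noteq> 0\<^sub>v n" and eigen: "A *\<^sub>v v = e \<cdot>\<^sub>v v" using A by auto
  have n: "n \<noteq> 0"
  proof
    assume "n = 0"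
    hence "v = 0\<^sub>v n" using v by (intro eq_vecI, auto)
    thus False using v0 by simp
  qed
  hence n0[simp]: "0 < n" by simp
  define b where "b = basis_completion v"
  define ws where "ws = gram_schmidt n b"
  define W where "W = mat_of_cols n ws"
  define W' where "W' = corthogonal_inv W"
  define A' where "A' = W' * A * W"
  interpret cof_vec_space n "TYPE(real)" .
  from basis_completion[OF v v0, folded b_def]
  have span_b: "span (set b) = carrier_vec n" and dist_b: "distinct b" 
    and indep: "\<not> lin_dep (set b)" and b: "set b \<subseteq> carrier_vec n" and hdb: "hd b = v" 
    and len_b: "length b = n" by auto
  from hdb len_b n obtain vs where bv: "b = v # vs" by (cases b, auto)
  from gram_schmidt_result[OF b dist_b indep refl, folded ws_def]
  have ws: "set ws \<subseteq> carrier_vec n" "corthogonal ws" "length ws = n" 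
    by (auto simp: len_b)
  from gram_schmidt_hd[OF v, of vs, folded bv] have hdws: "hd ws = v" unfolding ws_def .
  have orth_W: "corthogonal_mat W" using orthogonal_mat_of_cols ws unfolding W_def.
  have W: "W \<in> carrier_mat n n"
    using ws unfolding W_def using mat_of_cols_carrier(1)[of n ws] by auto
  have W': "W' \<in> carrier_mat n n" unfolding W'_def corthogonal_inv_def using W 
    by (auto simp: mat_of_rows_def)  
  from corthogonal_inv_result[OF orth_W] 
  have W'W: "inverts_mat W' W" unfolding W'_def .
  hence WW': "inverts_mat W W'" using mat_mult_left_right_inverse[OF W' W] W' W
    unfolding inverts_mat_def by auto
  have W'W1: "W' * W = 1\<^sub>m n" using W'W W' unfolding inverts_mat_def by auto
  have WW'1: "W * W' = 1\<^sub>m n" using WW' W unfolding inverts_mat_def by auto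
  have A': "A' \<in> carrier_mat n n" using W W' A unfolding A'_def by auto
  have A'A_wit: "similar_mat_wit A' A W' W"
    by (rule similar_mat_witI[of _ _ n], insert W W' A A' W'W WW', auto simp: A'_def
    inverts_mat_def)
  hence A'A: "similar_mat A' A" unfolding similar_mat_def by blast
  let ?f = "(\<lambda> i. if i = 0 then e else 0)"
  have col0: "col A' 0 = vec n ?f"
    unfolding A'_def W'_def W_def
    using corthogonal_col_ev_0[OF A v v0 eigen n hdws ws].
  define A1 where "A1 = mat 1 1 (\<lambda> _. e)"
  define A2 where "A2 = mat 1 ?n1 (\<lambda> (i,j). A' $$ (0, Suc j))"
  define A3 where "A3 = mat ?n1 ?n1 (\<lambda> (i,j). A' $$ (Suc i, Suc j))"
  have A1: "A1 \<in> carrier_mat 1 1" and A2: "A2 \<in> carrier_mat 1 ?n1" and A3: "A3 \<in> carrier_mat ?n1 ?n1"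
    unfolding A1_def A2_def A3_def by auto
  have A'block: "A' = four_block_mat A1 A2 (0\<^sub>m ?n1 1) A3"
  proof (rule eq_matI)
    fix i j assume i: "i < dim_row (four_block_mat A1 A2 (0\<^sub>m ?n1 1) A3)"
      and j: "j < dim_col (four_block_mat A1 A2 (0\<^sub>m ?n1 1) A3)"
    hence i': "i < n" and j': "j < n" using A1 A3 n by auto
    have c: "A' $$ (i, 0) = (if i = 0 then e else 0)"
      using arg_cong[OF col0, of "\<lambda> v. v $ i"] A' i' by auto
    show "A' $$ (i, j) = four_block_mat A1 A2 (0\<^sub>m ?n1 1) A3 $$ (i, j)"
      using i j A1 A2 A3 i' j' c unfolding A1_def A2_def A3_def
      by (cases i; cases j; auto)
  qed (insert A' A1 A3 n, auto)
  have "char_poly A' = char_poly A1 * char_poly A3" 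
    unfolding A'block by (rule char_poly_four_block_zeros_col[OF A1 A2 A3])
  also have "char_poly A1 = [: -e,1 :]"
    by (simp add: A1_def char_poly_defs det_def sign_def)
  finally have cpA: "char_poly A = [: -e,1 :] * char_poly A3" using char_poly_similar[OF A'A] by simp
  have "Polynomial.order e (char_poly A) = Polynomial.order e [: -e,1 :] + Polynomial.order e (char_poly A3)"
    unfolding cpA by (rule order_mult, insert cp0 cpA, auto)
  also have "Polynomial.order e [: -e,1 :] = 1" using order_power_n_n[of e 1] by simp
  finally have "Polynomial.order e (char_poly A3) \<noteq> 0" using ord by simp
  moreover have "char_poly A3 \<noteq> 0" using cp0 cpA by auto
  ultimately have "poly (char_poly A3) e = 0" using order_root by blast
  hence e3: "eigenvalue A3 e" using eigenvalue_root_char_poly[OF A3] by simp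
  define y where "y = find_eigenvector A3 e"
  from find_eigenvector[OF A3 e3] have "eigenvector A3 y e" unfolding y_def .
  from this[unfolded eigenvector_def]
  have y[simp]: "y \<in> carrier_vec ?n1" and y0: "y \<noteq> 0\<^sub>v ?n1" and eigeny: "A3 *\<^sub>v y = e \<cdot>\<^sub>v y" using A3 by auto
  define z where "z = vec n (\<lambda>i. if i = 0 then 0 else y $ (i - 1))"
  have z[simp]: "z \<in> carrier_vec n" unfolding z_def by auto
  have dz[simp]: "dim_vec z = n" unfolding z_def by auto
  have dy[simp]: "dim_vec y = ?n1" using y by auto
  define c where "c = (A' *\<^sub>v z) $ 0"
  have A'z: "A' *\<^sub>v z = e \<cdot>\<^sub>v z + c \<cdot>\<^sub>v unit_vec n 0"
  proof (rule eq_vecI)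
    fix i assume "i < dim_vec (e \<cdot>\<^sub>v z + c \<cdot>\<^sub>v unit_vec n 0)"
    hence i: "i < n" by auto
    show "(A' *\<^sub>v z) $ i = (e \<cdot>\<^sub>v z + c \<cdot>\<^sub>v unit_vec n 0) $ i"
    proof (cases i)
      case 0
      then show ?thesis using i n by (simp add: c_def z_def)
    next
      case (Suc k)
      have nn: "n = Suc ?n1" using n by simp
      have "(A' *\<^sub>v z) $ i = (\<Sum>j<n. A' $$ (i,j) * z $ j)"
        using A' i z by (auto simp: mult_mat_vec_def scalar_prod_def row_def lessThan_atLeast0 intro!: sum.cong)
      also have "\<dots> = (\<Sum>j<Suc ?n1. A' $$ (i,j) * z $ j)" using nn by simp
      also have "\<dots> = (\<Sum>j<?n1. A' $$ (i,Suc j) * z $ Suc j)"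
        unfolding sum.lessThan_Suc_shift by (simp add: z_def n)
      also have "\<dots> = (\<Sum>j<?n1. A3 $$ (k, j) * y $ j)"
        using Suc i by (intro sum.cong, auto simp: A3_def z_def)
      also have "\<dots> = (A3 *\<^sub>v y) $ k"
        using A3 Suc i y by (auto simp: mult_mat_vec_def scalar_prod_def row_def lessThan_atLeast0 intro!: sum.cong)
      also have "\<dots> = e * y $ k" using eigeny Suc i by simp
      finally show ?thesis using Suc i by (simp add: z_def)
    qed
  qed (use A' in simp)
  define x where "x = W *\<^sub>v z"
  have x[simp]: "x \<in> carrier_vec n" unfolding x_def using W by auto
  have AW: "A * W = W * A'"
  proof -
    have WA: "W' * A \<in> carrier_mat n n" using W' A by auto
    have "W * A' = W * ((W' * A) * W)" unfolding A'_def ..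
    also have "\<dots> = (W * (W' * A)) * W" using assoc_mult_mat[OF W WA W] by simp
    also have "W * (W' * A) = (W * W') * A" using assoc_mult_mat[OF W W' A] by simp
    also have "\<dots> = A" using WW'1 A by simp
    finally show ?thesis by simp
  qed
  have Wcol: "W *\<^sub>v unit_vec n 0 = v"
  proof -
    have ws0: "ws ! 0 = v" using hdws ws n by (cases ws, auto)
    have ws0c: "ws ! 0 \<in> carrier_vec n" using ws0 v by simp
    have "col W 0 = v" unfolding W_def using col_mat_of_cols[of 0 ws n] ws0 ws0c ws n by simp
    moreover have "W *\<^sub>v unit_vec n 0 = col W 0"
      by (rule eq_vecI, insert W n, auto simp: mult_mat_vec_def)
    ultimately show ?thesis by simp
  qed
  have Ax: "A *\<^sub>v x = e \<cdot>\<^sub>v x + c \<cdot>\<^sub>v v"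
  proof -
    have "A *\<^sub>v x = (A * W) *\<^sub>v z" unfolding x_def using A W by simp
    also have "\<dots> = W *\<^sub>v (A' *\<^sub>v z)" unfolding AW using W A' by simp
    also have "\<dots> = W *\<^sub>v (e \<cdot>\<^sub>v z) + W *\<^sub>v (c \<cdot>\<^sub>v unit_vec n 0)" unfolding A'z
      using W by (simp add: mult_add_distrib_mat_vec)
    also have "\<dots> = e \<cdot>\<^sub>v x + c \<cdot>\<^sub>v v" using W Wcol unfolding x_def
      by (simp add: mult_mat_vec)
    finally show ?thesis .
  qed
  have "v \<bullet> (A *\<^sub>v x) = (A *\<^sub>v v) \<bullet> x" by (rule sym_scalar[OF A sym v x])
  hence "e * (v \<bullet> x) + c * (v \<bullet> v) = e * (v \<bullet> x)" unfolding Ax eigen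
    by (simp add: scalar_prod_add_distrib[of _ n] scalar_prod_smult_distrib[OF v x] smult_scalar_prod_distrib[OF v x])
  hence "c = 0" using self_pos[OF v v0] by simp
  hence Ax': "A *\<^sub>v x = e \<cdot>\<^sub>v x" using Ax by simp
  have dx[simp]: "dim_vec x = n" and dv[simp]: "dim_vec v = n" using x v by auto
  define t where "t = (v \<bullet> x) / (v \<bullet> v)"
  define u2 where "u2 = x - t \<cdot>\<^sub>v v"
  have u2[simp]: "u2 \<in> carrier_vec n" unfolding u2_def by auto
  have "A *\<^sub>v u2 = e \<cdot>\<^sub>v x - t \<cdot>\<^sub>v (e \<cdot>\<^sub>v v)" unfolding u2_def using A Ax' eigen
    by (simp add: mult_minus_distrib_mat_vec mult_mat_vec)
  also have "\<dots> = e \<cdot>\<^sub>v u2" unfolding u2_def using x v by (intro eq_vecI) (auto simp: algebra_simps)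
  finally have "A *\<^sub>v u2 = e \<cdot>\<^sub>v u2" .
  moreover have "v \<bullet> u2 = 0" unfolding u2_def t_def using self_pos[OF v v0]
    by (simp add: scalar_prod_minus_distrib[of _ n])
  moreover have "u2 \<noteq> 0\<^sub>v n"
  proof
    assume u20: "u2 = 0\<^sub>v n"
    have "u2 = W *\<^sub>v (z - t \<cdot>\<^sub>v unit_vec n 0)" unfolding u2_def x_def using W Wcol
      by (simp add: mult_minus_distrib_mat_vec mult_mat_vec)
    hence "W' *\<^sub>v u2 = (W' * W) *\<^sub>v (z - t \<cdot>\<^sub>v unit_vec n 0)" using W W' by simp
    hence "z - t \<cdot>\<^sub>v unit_vec n 0 = W' *\<^sub>v 0\<^sub>v n" using W'W1 u20 by simp
    also have "W' *\<^sub>v 0\<^sub>v n = 0\<^sub>v n" using W' by auto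
    finally have "z - t \<cdot>\<^sub>v unit_vec n 0 = 0\<^sub>v n" .
    moreover from y y0 obtain k where k: "k < ?n1" "y $ k \<noteq> 0"
      by (metis eq_vecI carrier_vecD index_zero_vec(1) index_zero_vec(2))
    ultimately have "(z - t \<cdot>\<^sub>v unit_vec n 0) $ Suc k = 0" by simp
    thus False using k n by (simp add: z_def)
  qed
  ultimately show ?thesis using v v0 eigen u2 by blast
qed



lemma no_two_pos:
  fixes A :: "real mat"
  assumes A: "A \<in> carrier_mat n n"
  and g: "g \<in> carrier_vec n"
  and quad: "\<And>x. x \<in> carrier_vec n \<Longrightarrow> x \<bullet> (A *\<^sub>v x) \<le> K * (g \<bullet> x)^2"
  and u: "u \<in> carrier_vec n" and w: "w \<in> carrier_vec n"
  and u0: "u \<noteq> 0\<^sub>v n" and w0: "w \<noteq> 0\<^sub>v n"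
  and Au: "A *\<^sub>v u = a \<cdot>\<^sub>v u" and Aw: "A *\<^sub>v w = b \<cdot>\<^sub>v w"
  and a: "a > 0" and b: "b > 0" and uw: "u \<bullet> w = 0"
  shows False
proof (cases "g \<bullet> u = 0")
  case True
  have "u \<bullet> (A *\<^sub>v u) = a * (u \<bullet> u)" unfolding Au using u by simp
  moreover have "u \<bullet> u > 0" by (rule self_pos[OF u u0])
  moreover have "u \<bullet> (A *\<^sub>v u) \<le> 0" using quad[OF u] True by simp
  ultimately show False using a by (simp add: mult_pos_pos) (smt (verit) mult_pos_pos)
next
  case False
  define \<alpha> where "\<alpha> = g \<bullet> u"
  define \<beta> where "\<beta> = g \<bullet> w"
  define x where "x = \<alpha> \<cdot>\<^sub>v w - \<beta> \<cdot>\<^sub>v u"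
  have x: "x \<in> carrier_vec n" unfolding x_def using u w by auto
  have du[simp]: "dim_vec u = n" and dw[simp]: "dim_vec w = n" and dg[simp]: "dim_vec g = n"
    using u w g by auto
  have xi: "\<And>i. i < n \<Longrightarrow> x $ i = \<alpha> * w $ i - \<beta> * u $ i" unfolding x_def by auto
  have Ax: "A *\<^sub>v x = \<alpha> \<cdot>\<^sub>v (b \<cdot>\<^sub>v w) - \<beta> \<cdot>\<^sub>v (a \<cdot>\<^sub>v u)"
    unfolding x_def using A u w Au Aw by (simp add: mult_minus_distrib_mat_vec mult_mat_vec)
  have Axi: "\<And>i. i < n \<Longrightarrow> (A *\<^sub>v x) $ i = \<alpha> * b * w $ i - \<beta> * a * u $ i" unfolding Ax by auto
  have sp: "\<And>y z. y \<in> carrier_vec n \<Longrightarrow> z \<in> carrier_vec n \<Longrightarrow> y \<bullet> z = (\<Sum>i<n. y $ i * z $ i)"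
    by (auto simp: scalar_prod_def lessThan_atLeast0)
  have "g \<bullet> x = (\<Sum>i<n. g $ i * (\<alpha> * w $ i - \<beta> * u $ i))" using sp[OF g x] xi by simp
  also have "\<dots> = \<alpha> * (g \<bullet> w) - \<beta> * (g \<bullet> u)"
    using sp[OF g w] sp[OF g u] by (simp add: algebra_simps sum_subtractf sum_distrib_left)
  also have "\<dots> = 0" unfolding \<alpha>_def \<beta>_def by simp
  finally have gx: "g \<bullet> x = 0" .
  have Axc: "A *\<^sub>v x \<in> carrier_vec n" using A x by simp
  have "x \<bullet> (A *\<^sub>v x) = (\<Sum>i<n. (\<alpha> * w $ i - \<beta> * u $ i) * (\<alpha> * b * w $ i - \<beta> * a * u $ i))"
    unfolding sp[OF x Axc] by (intro sum.cong refl, metis lessThan_iff xi Axi)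
  also have "\<dots> = \<alpha>^2 * b * (\<Sum>i<n. w $ i * w $ i) + \<beta>^2 * a * (\<Sum>i<n. u $ i * u $ i)
     - \<alpha> * \<beta> * (a + b) * (\<Sum>i<n. u $ i * w $ i)"
    by (simp add: algebra_simps sum_subtractf sum.distrib sum_distrib_left power2_eq_square)
  also have "(\<Sum>i<n. u $ i * w $ i) = 0" using sp[OF u w] uw by simp
  also have "(\<Sum>i<n. w $ i * w $ i) = w \<bullet> w" using sp[OF w w] by simp
  also have "(\<Sum>i<n. u $ i * u $ i) = u \<bullet> u" using sp[OF u u] by simp
  finally have eq: "x \<bullet> (A *\<^sub>v x) = \<alpha>^2 * b * (w \<bullet> w) + \<beta>^2 * a * (u \<bullet> u)" by simp
  have "\<alpha>^2 > 0" using False unfolding \<alpha>_def by simp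
  moreover have "w \<bullet> w > 0" by (rule self_pos[OF w w0])
  moreover have "u \<bullet> u \<ge> 0" using self_pos[OF u u0] by simp
  ultimately have "x \<bullet> (A *\<^sub>v x) > 0" unfolding eq using a b
    by (smt (verit) mult_nonneg_nonneg mult_pos_pos zero_le_power2)
  moreover have "x \<bullet> (A *\<^sub>v x) \<le> 0" using quad[OF x] gx by simp
  ultimately show False by simp
qed

lemma main_lin:
  fixes A :: "real mat"
  assumes A: "A \<in> carrier_mat n n"
  and sym: "\<And>i j. i < n \<Longrightarrow> j < n \<Longrightarrow> A $$ (i,j) = A $$ (j,i)"
  and g: "g \<in> carrier_vec n"
  and quad: "\<And>x. x \<in> carrier_vec n \<Longrightarrow> x \<bullet> (A *\<^sub>v x) \<le> K * (g \<bullet> x)^2"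
  shows "num_pos_eigenvalues A \<le> 1"
proof -
  let ?S = "{a. a > 0 \<and> eigenvalue A a}"
  have ev: "\<And>a. eigenvalue A a \<Longrightarrow> \<exists>u. u \<in> carrier_vec n \<and> u \<noteq> 0\<^sub>v n \<and> A *\<^sub>v u = a \<cdot>\<^sub>v u"
    using A unfolding eigenvalue_def eigenvector_def by auto
  have uniq: "a = b" if "a \<in> ?S" "b \<in> ?S" for a b
  proof (rule ccontr)
    assume ab: "a \<noteq> b"
    from that ev obtain u w where u: "u \<in> carrier_vec n" "u \<noteq> 0\<^sub>v n" "A *\<^sub>v u = a \<cdot>\<^sub>v u"
      and w: "w \<in> carrier_vec n" "w \<noteq> 0\<^sub>v n" "A *\<^sub>v w = b \<cdot>\<^sub>v w" by blast
    have "u \<bullet> (A *\<^sub>v w) = (A *\<^sub>v u) \<bullet> w" by (rule sym_scalar[OF A sym u(1) w(1)])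
    hence "b * (u \<bullet> w) = a * (u \<bullet> w)" using u w by simp
    hence "u \<bullet> w = 0" using ab by simp
    thus False using no_two_pos[OF A g quad u(1) w(1) u(2) w(2) u(3) w(3)] that by auto
  qed
  have ord: "Polynomial.order a (char_poly A) \<le> 1" if "a \<in> ?S" for a
  proof (rule ccontr)
    assume "\<not> ?thesis"
    hence "Polynomial.order a (char_poly A) \<ge> 2" by simp
    from deflate[OF A sym this] obtain u w where
      "u \<in> carrier_vec n \<and> w \<in> carrier_vec n \<and> u \<noteq> 0\<^sub>v n \<and> w \<noteq> 0\<^sub>v n \<and>
     A *\<^sub>v u = a \<cdot>\<^sub>v u \<and> A *\<^sub>v w = a \<cdot>\<^sub>v w \<and> u \<bullet> w = 0" by blast
    thus False using no_two_pos[OF A g quad, of u w a a] that by auto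
  qed
  show ?thesis
  proof (cases "?S = {}")
    case True
    then show ?thesis unfolding num_pos_eigenvalues_def True by simp
  next
    case False
    then obtain a where a: "a \<in> ?S" by blast
    hence "?S = {a}" using uniq by blast
    thus ?thesis unfolding num_pos_eigenvalues_def using ord[OF a] by simp
  qed
qed



lemma sum_shift:
  fixes f :: "nat set \<Rightarrow> real"
  assumes T: "T \<subseteq> {1..n}"
  shows "(\<Sum>S\<in>Pow {1..n}. if S \<inter> T = {} then f (S \<union> T) else 0) = (\<Sum>B\<in>{B\<in>Pow {1..n}. T \<subseteq> B}. f B)"
proof -
  have "(\<Sum>S\<in>Pow {1..n}. if S \<inter> T = {} then f (S \<union> T) else 0) = (\<Sum>S\<in>{S\<in>Pow {1..n}. S \<inter> T = {}}. f (S \<union> T))"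
    by (rule sum.inter_filter[symmetric]) simp
  also have "\<dots> = (\<Sum>B\<in>{B\<in>Pow {1..n}. T \<subseteq> B}. f B)"
    by (rule sum.reindex_bij_witness[of _ "\<lambda>B. B - T" "\<lambda>S. S \<union> T"]) (insert T, auto)
  finally show ?thesis .
qed

lemma sum_bases:
  assumes "T \<subseteq> {1..n}"
  shows "(\<Sum>B\<in>{B\<in>Pow {1..n}. T \<subseteq> B}. \<pi> B) = (\<Sum>B\<in>{B\<in>bases \<pi> n. T \<subseteq> B}. \<pi> B)"
  by (rule sum.mono_neutral_right) (auto simp: bases_def)

lemma H_formula:
  fixes \<pi> :: "nat set \<Rightarrow> real"
  assumes I: "I \<subseteq> {1..n}" and i: "i \<in> {1..n} - I" and j: "j \<in> {1..n} - I" and ij: "i \<noteq> j"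
  shows "eval_ones n (pderiv_ma i (pderiv_ma j (pderiv_set I \<pi>))) = (\<Sum>B\<in>{B\<in>bases \<pi> n. I \<union> {i,j} \<subseteq> B}. \<pi> B)"
proof -
  have "eval_ones n (pderiv_ma i (pderiv_ma j (pderiv_set I \<pi>))) =
     (\<Sum>S\<in>Pow {1..n}. if S \<inter> (I \<union> {i,j}) = {} then \<pi> (S \<union> (I \<union> {i,j})) else 0)"
    unfolding eval_ones_def pderiv_ma_def pderiv_set_def
  proof (intro sum.cong refl)
    fix S assume "S \<in> Pow {1..n}"
    have eq: "insert j (insert i S) \<union> I = S \<union> (I \<union> {i,j})" by auto
    show "(if i \<in> S then 0 else if j \<in> insert i S then 0
          else if insert j (insert i S) \<inter> I = {} then \<pi> (insert j (insert i S) \<union> I) else 0) =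
         (if S \<inter> (I \<union> {i,j}) = {} then \<pi> (S \<union> (I \<union> {i,j})) else 0)"
      unfolding eq using i j ij by auto
  qed
  also have "\<dots> = (\<Sum>B\<in>{B\<in>Pow {1..n}. I \<union> {i,j} \<subseteq> B}. \<pi> B)"
    by (rule sum_shift, insert I i j, auto)
  also have "\<dots> = (\<Sum>B\<in>{B\<in>bases \<pi> n. I \<union> {i,j} \<subseteq> B}. \<pi> B)"
    by (rule sum_bases, insert I i j, auto)
  finally show ?thesis .
qed

lemma H_diag:
  "eval_ones n (pderiv_ma i (pderiv_ma i c)) = 0"
  unfolding eval_ones_def pderiv_ma_def by simp

lemma P_formula:
  fixes \<pi> :: "nat set \<Rightarrow> real"
  assumes I: "I \<subseteq> {1..n}"
  shows "eval_ones n (pderiv_set I \<pi>) = (\<Sum>B\<in>{B\<in>Pow {1..n}. I \<subseteq> B}. \<pi> B)"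
  unfolding eval_ones_def pderiv_set_def by (rule sum_shift[OF I])

lemma reindex_es:
  fixes f :: "nat \<Rightarrow> real"
  assumes d: "distinct es" and sub: "set es \<subseteq> {1..n}"
  and z: "\<And>i. i \<in> {1..n} \<Longrightarrow> i \<notin> set es \<Longrightarrow> f i = 0"
  shows "(\<Sum>i\<in>{1..n}. f i) = (\<Sum>a<length es. f (es ! a))"
proof -
  have "(\<Sum>i\<in>{1..n}. f i) = (\<Sum>i\<in>set es. f i)"
    by (rule sum.mono_neutral_right, insert sub z, auto)
  also have "\<dots> = (\<Sum>a<length es. f (es ! a))"
    by (rule sum.reindex_bij_betw[symmetric], rule bij_betw_nth[OF d refl refl])
  finally show ?thesis .
qed



theorem proposition2p3:
  fixes n r :: nat and \<pi> :: "nat set \<Rightarrow> real" and Z :: real and I :: "nat set"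
  assumes nonneg: "\<And>S. \<pi> S \<ge> 0"
    and supp: "\<And>S. \<pi> S \<noteq> 0 \<Longrightarrow> S \<subseteq> {1..n} \<and> card S = r"
    and distr: "(\<Sum>S\<in>Pow {1..n}. \<pi> S) = 1"
    and slc: "strongly_log_concave n \<pi>"
    and Zpos: "Z > 0"
    and indepI: "I \<in> indep \<pi> n"
    and cardI: "card I + 2 \<le> r"
  shows "num_pos_eigenvalues (W_mat \<pi> n r Z I) \<le> 1"
proof -
  from indepI obtain B0 where B0: "B0 \<in> bases \<pi> n" "I \<subseteq> B0" unfolding indep_def by auto
  hence B0n: "B0 \<subseteq> {1..n}" and piB0: "\<pi> B0 > 0" using nonneg[of B0] unfolding bases_def by auto
  have In: "I \<subseteq> {1..n}" using B0 B0n by auto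
  have finI: "finite I" using In finite_subset by blast
  define c where "c = pderiv_set I \<pi>"
  define P where "P = eval_ones n c"
  define G where "G = (\<lambda>i. eval_ones n (pderiv_ma i c))"
  define H where "H = (\<lambda>i j. eval_ones n (pderiv_ma i (pderiv_ma j c)))"
  have "P = (\<Sum>B\<in>{B\<in>Pow {1..n}. I \<subseteq> B}. \<pi> B)" unfolding P_def c_def by (rule P_formula[OF In])
  also have "\<dots> \<ge> \<pi> B0" by (rule member_le_sum, insert B0 B0n nonneg, auto)
  finally have Ppos: "P > 0" using piB0 by simp
  define es where "es = sorted_list_of_set ({1..n} - I)"
  define m where "m = length es"
  have des: "distinct es" and ses: "set es = {1..n} - I" unfolding es_def by auto
  define A where "A = W_mat \<pi> n r Z I"
  have A: "A \<in> carrier_mat m m" unfolding A_def W_mat_def Let_def m_def es_def by auto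
  have Aij: "A $$ (a,b) = (if a = b then 0 else weight \<pi> n r Z (I \<union> {es ! a, es ! b}))"
    if "a < m" "b < m" for a b
    using that unfolding A_def W_mat_def Let_def m_def es_def by auto
  define K0 where "K0 = fact (r - card I - 2) * Z"
  have K0: "K0 \<ge> 0" unfolding K0_def using Zpos by simp
  have esin: "es ! a \<in> {1..n} - I" if "a < m" for a using that ses m_def nth_mem by blast
  have Aent: "A $$ (a,b) = K0 * H (es ! a) (es ! b)" if ab: "a < m" "b < m" for a b
  proof (cases "a = b")
    case True
    thus ?thesis using Aij[OF ab] H_diag unfolding H_def by simp
  next
    case False
    hence ne: "es ! a \<noteq> es ! b" using des ab unfolding m_def by (simp add: nth_eq_iff_index_eq)
    have ca: "card (I \<union> {es ! a, es ! b}) = card I + 2"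
      using finI esin[OF ab(1)] esin[OF ab(2)] ne by (simp add: card_insert_if)
    have "A $$ (a,b) = fact (r - card I - 2) * ((\<Sum>B\<in>{B\<in>bases \<pi> n. I \<union> {es ! a, es ! b} \<subseteq> B}. \<pi> B) * Z)"
      using Aij[OF ab] False unfolding weight_def ca by (simp add: sum_distrib_right)
    also have "(\<Sum>B\<in>{B\<in>bases \<pi> n. I \<union> {es ! a, es ! b} \<subseteq> B}. \<pi> B) = H (es ! a) (es ! b)"
      unfolding H_def c_def by (rule H_formula[symmetric, OF In esin[OF ab(1)] esin[OF ab(2)] ne])
    finally show ?thesis unfolding K0_def by simp
  qed
  have sym: "A $$ (a,b) = A $$ (b,a)" if "a < m" "b < m" for a b
    using Aij[OF that] Aij[OF that(2,1)] by (simp add: insert_commute)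
  define g where "g = vec m (\<lambda>a. G (es ! a))"
  have g: "g \<in> carrier_vec m" unfolding g_def by simp
  have quad: "x \<bullet> (A *\<^sub>v x) \<le> (K0 / P) * (g \<bullet> x)^2" if x: "x \<in> carrier_vec m" for x
  proof -
    define v where "v = (\<lambda>k. if k \<in> set es then x $ (the_inv_into {..<m} ((!) es) k) else 0)"
    have inj: "inj_on ((!) es) {..<m}" using des unfolding m_def by (simp add: inj_on_nth)
    have vnth: "v (es ! a) = x $ a" if "a < m" for a
      unfolding v_def using that the_inv_into_f_f[OF inj] m_def by auto
    have sub: "set es \<subseteq> {1..n}" using ses by auto
    have SS: "(\<Sum>i\<in>{1..n}. \<Sum>j\<in>{1..n}. v i * H i j * v j) = (\<Sum>a<m. \<Sum>b<m. x $ a * H (es ! a) (es ! b) * x $ b)"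
    proof -
      have "(\<Sum>i\<in>{1..n}. \<Sum>j\<in>{1..n}. v i * H i j * v j) = (\<Sum>a<m. \<Sum>j\<in>{1..n}. v (es ! a) * H (es ! a) j * v j)"
        unfolding m_def by (rule reindex_es[OF des sub], auto simp: v_def)
      also have "\<dots> = (\<Sum>a<m. \<Sum>b<m. v (es ! a) * H (es ! a) (es ! b) * v (es ! b))"
        unfolding m_def by (intro sum.cong refl reindex_es[OF des sub], auto simp: v_def)
      also have "\<dots> = (\<Sum>a<m. \<Sum>b<m. x $ a * H (es ! a) (es ! b) * x $ b)"
        by (intro sum.cong refl, simp add: vnth)
      finally show ?thesis .
    qed
    have GG: "(\<Sum>i\<in>{1..n}. v i * G i) = g \<bullet> x"
    proof -
      have "(\<Sum>i\<in>{1..n}. v i * G i) = (\<Sum>a<m. v (es ! a) * G (es ! a))"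
        unfolding m_def by (rule reindex_es[OF des sub], auto simp: v_def)
      also have "\<dots> = g \<bullet> x" using x unfolding g_def
        by (auto simp: scalar_prod_def vnth lessThan_atLeast0 mult.commute intro!: sum.cong)
      finally show ?thesis .
    qed
    have hess: "(\<Sum>i\<in>{1..n}. \<Sum>j\<in>{1..n}. v i * hess_log_ones n c i j * v j) \<le> 0"
      using slc In Ppos unfolding strongly_log_concave_def neg_semidef_on_def P_def c_def by auto
    have "(\<Sum>i\<in>{1..n}. \<Sum>j\<in>{1..n}. v i * hess_log_ones n c i j * v j)
      = (\<Sum>i\<in>{1..n}. \<Sum>j\<in>{1..n}. (P * (v i * H i j * v j) - (v i * G i) * (v j * G j)) / P^2)"
      unfolding hess_log_ones_def P_def[symmetric]
      by (intro sum.cong refl) (simp add: field_simps H_def G_def)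
    also have "\<dots> = (P * (\<Sum>i\<in>{1..n}. \<Sum>j\<in>{1..n}. v i * H i j * v j) - (\<Sum>i\<in>{1..n}. \<Sum>j\<in>{1..n}. (v i * G i) * (v j * G j))) / P^2"
      by (simp add: sum_divide_distrib[symmetric] sum_subtractf sum_distrib_left)
    also have "(\<Sum>i\<in>{1..n}. \<Sum>j\<in>{1..n}. (v i * G i) * (v j * G j)) = (\<Sum>i\<in>{1..n}. v i * G i)^2"
      by (simp add: power2_eq_square sum_product)
    finally have "P * (\<Sum>i\<in>{1..n}. \<Sum>j\<in>{1..n}. v i * H i j * v j) \<le> (g \<bullet> x)^2"
      using hess Ppos GG by (simp add: divide_le_0_iff)
    hence le: "(\<Sum>a<m. \<Sum>b<m. x $ a * H (es ! a) (es ! b) * x $ b) \<le> (g \<bullet> x)^2 / P"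
      using Ppos unfolding SS by (simp add: field_simps)
    have "x \<bullet> (A *\<^sub>v x) = (\<Sum>a<m. x $ a * (\<Sum>b<m. A $$ (a,b) * x $ b))"
      using x A by (auto simp: scalar_prod_def mult_mat_vec_def row_def lessThan_atLeast0 intro!: sum.cong)
    also have "\<dots> = K0 * (\<Sum>a<m. \<Sum>b<m. x $ a * H (es ! a) (es ! b) * x $ b)"
      by (simp add: Aent sum_distrib_left mult_ac)
    also have "\<dots> \<le> K0 * ((g \<bullet> x)^2 / P)" by (rule mult_left_mono[OF le K0])
    finally show ?thesis by simp
  qed
  show ?thesis unfolding A_def[symmetric] by (rule main_lin[OF A sym g quad])
qed


end
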